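(* Let $V=\bigoplus_{n\in\mathbb{Z}}V_n$ be an $\mathcal{H}$-module vertex algebra such that $V_n=0$ for $n<0$ and $V_0=\mathbb{F}\mathbf{1}$, and let $J$ be the sum of all proper graded $V$-submodules of $V$ (the maximal proper graded $V$-submodule of $V$). Then $J$ is an ideal of $V$. If in addition $L_1^{(n)}V_n=0$ for all $n\ge1$, then $J$ is also an $\mathcal{H}$-submodule of $V$.
   Context: Throughout, $\mathbb{F}$ is an algebraically closed field of odd prime characteristic $p$; vertex algebras are over $\mathbb{F}$. Every vertex algebra $V$ is a module for the bialgebra $\mathcal{B}$ with basis $\{\mathcal{D}^{(n)}\}_{n\in\mathbb{N}}$, $\mathcal{D}^{(m)}\mathcal{D}^{(n)}=\binom{m+n}{n}\mathcal{D}^{(m+n)}$, via $\mathcal{D}^{(n)}v=v_{-n-1}\mathbf{1}$. $\mathcal{H}$: let $\mathfrak{sl}_2$ over $\mathbb{C}$ have basis $L_{-1},L_0,L_1$ with $[L_1,L_{-1}]=2L_0$, $[L_0,L_{\pm1}]=\mp L_{\pm1}$; put $L_{\pm1}^{(n)}=L_{\pm1}^n/n!$, $L_0^{(n)}=\binom{-2L_0}{n}$ in $U(\mathfrak{sl}_2)$; $U(\mathfrak{sl}_2)_{\mathbb{Z}}$ is the $\mathbb{Z}$-span of the $L_{-1}^{(i)}L_0^{(j)}L_1^{(k)}$, and $\mathcal{H}=\mathbb{F}\otimes_{\mathbb{Z}}U(\mathfrak{sl}_2)_{\mathbb{Z}}$. $e^{zL_{\pm1}}=\sum_{n\ge0}z^nL_{\pm1}^{(n)}$.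 For $v$ homogeneous of degree $n$, $f(z)^{\deg}v:=f(z)^nv$, extended linearly. A $\mathbb{Z}$-graded vertex algebra: $V=\bigoplus V_n$, $\mathbf{1}\in V_0$, $u_rV_n\subset V_{m+n-r-1}$ for $u\in V_m$; a graded $V$-submodule of $V$ is a subspace $U=\bigoplus(U\cap V_n)$ with $u_rU\subset U$ for all $u\in V$. A $\mathbb{Z}$-graded weight $\mathcal{H}$-module: $W=\bigoplus W_n$ with $\mathcal{H}$-action, $L_{\pm1}^{(r)}W_n\subset W_{n\mp r}$, $L_0^{(r)}|_{W_n}=\binom{-2n}{r}$. An $\mathcal{H}$-module vertex algebra: a $\mathbb{Z}$-graded vertex algebra $V$ which is a $\mathbb{Z}$-graded weight $\mathcal{H}$-module with $L_{-1}^{(n)}=\mathcal{D}^{(n)}$, such that $V_n=0$ for $n\ll0$, $L_1^{(n)}\mathbf{1}=\delta_{n,0}\mathbf{1}$, and $e^{zL_1}Y(v,z_0)e^{-zL_1}=Y\bigl(e^{z(1-zz_0)L_1}(1-zz_0)^{-2\deg}v,z_0/(1-zz_0)\bigr)$ for $v\in V$. *)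

theory Defs
  imports Main "HOL-Computational_Algebra.Polynomial"
begin

definition alg_closed_field :: "'a::field itself \<Rightarrow> bool" where
  "alg_closed_field _ \<longleftrightarrow> (\<forall>P :: 'a poly. degree P > 0 \<longrightarrow> (\<exists>x. poly P x = 0))"

definition ibinom :: "int \<Rightarrow> nat \<Rightarrow> int" where
  "ibinom m k = \<lfloor>(of_int m :: rat) gchoose k\<rfloor>"

text \<open>The vertex algebra is the whole type 'v, a vector space over 'a with scalar
  multiplication scale; Y u r v is the mode u_r v; vac is the vacuum.\<close>

definition vertex_algebra ::
  "('a::field \<Rightarrow> 'v::ab_group_add \<Rightarrow> 'v) \<Rightarrow> 'v \<Rightarrow> ('v \<Rightarrow> int \<Rightarrow> 'v \<Rightarrow> 'v) \<Rightarrow> bool" where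
  "vertex_algebra scale vac Y \<longleftrightarrow>
     vector_space scale
   \<and> (\<forall>u r. Vector_Spaces.linear scale scale (Y u r))
   \<and> (\<forall>v r. Vector_Spaces.linear scale scale (\<lambda>u. Y u r v))
   \<and> (\<forall>u v. \<exists>N. \<forall>r\<ge>N. Y u r v = 0)
   \<and> (\<forall>v r. Y vac r v = (if r = -1 then v else 0))
   \<and> (\<forall>u. Y u (-1) vac = u)
   \<and> (\<forall>u r. r \<ge> 0 \<longrightarrow> Y u r vac = 0)
   \<and> (\<forall>u v w m n r (N::nat).
        (\<forall>i\<ge>N. Y u (r + int i) v = 0 \<and> Y v (n + int i) w = 0 \<and> Y u (m + int i) w = 0) \<longrightarrow>
        (\<Sum>i<N. scale (of_int (ibinom m i)) (Y (Y u (r + int i) v) (m + n - int i) w))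
      = (\<Sum>i<N. scale (of_int ((-1)^i * ibinom r i))
            (Y u (m + r - int i) (Y v (n + int i) w)
             - scale (if even r then 1 else -1) (Y v (n + r - int i) (Y u (m + int i) w)))))"

definition direct_sum_grading :: "('a::field \<Rightarrow> 'v::ab_group_add \<Rightarrow> 'v) \<Rightarrow> (int \<Rightarrow> 'v set) \<Rightarrow> bool" where
  "direct_sum_grading scale Vn \<longleftrightarrow>
     (\<forall>n. module.subspace scale (Vn n))
   \<and> (\<forall>v. \<exists>!c :: int \<Rightarrow> 'v. (\<forall>n. c n \<in> Vn n) \<and> finite {n. c n \<noteq> 0} \<and> v = sum c {n. c n \<noteq> 0})"

definition graded_vertex_algebra ::
  "('a::field \<Rightarrow> 'v::ab_group_add \<Rightarrow> 'v) \<Rightarrow> 'v \<Rightarrow> ('v \<Rightarrow> int \<Rightarrow> 'v \<Rightarrow> 'v) \<Rightarrow> (int \<Rightarrow> 'v set) \<Rightarrow> bool" where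
  "graded_vertex_algebra scale vac Y Vn \<longleftrightarrow>
     vertex_algebra scale vac Y \<and> direct_sum_grading scale Vn \<and> vac \<in> Vn 0
   \<and> (\<forall>m n u v r. u \<in> Vn m \<longrightarrow> v \<in> Vn n \<longrightarrow> Y u r v \<in> Vn (m + n - r - 1))"

definition graded_subspace :: "('a::field \<Rightarrow> 'v::ab_group_add \<Rightarrow> 'v) \<Rightarrow> (int \<Rightarrow> 'v set) \<Rightarrow> 'v set \<Rightarrow> bool" where
  "graded_subspace scale Vn U \<longleftrightarrow> module.subspace scale U
   \<and> (\<forall>x\<in>U. \<exists>c :: int \<Rightarrow> 'v. (\<forall>n. c n \<in> U \<inter> Vn n) \<and> finite {n. c n \<noteq> 0} \<and> x = sum c {n. c n \<noteq> 0})"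

definition graded_V_submodule ::
  "('a::field \<Rightarrow> 'v::ab_group_add \<Rightarrow> 'v) \<Rightarrow> (int \<Rightarrow> 'v set) \<Rightarrow> ('v \<Rightarrow> int \<Rightarrow> 'v \<Rightarrow> 'v) \<Rightarrow> 'v set \<Rightarrow> bool" where
  "graded_V_submodule scale Vn Y U \<longleftrightarrow> graded_subspace scale Vn U \<and> (\<forall>u r x. x \<in> U \<longrightarrow> Y u r x \<in> U)"

definition Jmax ::
  "('a::field \<Rightarrow> 'v::ab_group_add \<Rightarrow> 'v) \<Rightarrow> (int \<Rightarrow> 'v set) \<Rightarrow> ('v \<Rightarrow> int \<Rightarrow> 'v \<Rightarrow> 'v) \<Rightarrow> 'v set" where
  "Jmax scale Vn Y = module.span scale (\<Union> {U. graded_V_submodule scale Vn Y U \<and> U \<noteq> UNIV})"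

definition VA_ideal :: "('a::field \<Rightarrow> 'v::ab_group_add \<Rightarrow> 'v) \<Rightarrow> ('v \<Rightarrow> int \<Rightarrow> 'v \<Rightarrow> 'v) \<Rightarrow> 'v set \<Rightarrow> bool" where
  "VA_ideal scale Y I \<longleftrightarrow> module.subspace scale I
   \<and> (\<forall>u r x. x \<in> I \<longrightarrow> Y u r x \<in> I \<and> Y x r u \<in> I)"

text \<open>Lm k, L0 k, Lp k are the actions of L_{-1}^{(k)}, L_0^{(k)}, L_1^{(k)}.
  H = F \<otimes> U(sl_2)_Z is given by generators and relations (with e = L_1, f = -L_{-1},
  h = -2L_0): divided-power relations and Kostant's commutation formula
  e^{(a)} f^{(b)} = \<Sum>_j f^{(b-j)} binom(h-a-b+2j, j) e^{(a-j)}; the relations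
  involving binom(h,\<cdot>) are automatic because L_0^{(r)} acts on Vn n by binom(-2n,r).\<close>
definition weight_H_module ::
  "('a::field \<Rightarrow> 'v::ab_group_add \<Rightarrow> 'v) \<Rightarrow> (int \<Rightarrow> 'v set)
   \<Rightarrow> (nat \<Rightarrow> 'v \<Rightarrow> 'v) \<Rightarrow> (nat \<Rightarrow> 'v \<Rightarrow> 'v) \<Rightarrow> (nat \<Rightarrow> 'v \<Rightarrow> 'v) \<Rightarrow> bool" where
  "weight_H_module scale Vn Lm L0 Lp \<longleftrightarrow>
     direct_sum_grading scale Vn
   \<and> (\<forall>k. Vector_Spaces.linear scale scale (Lm k) \<and> Vector_Spaces.linear scale scale (L0 k)
          \<and> Vector_Spaces.linear scale scale (Lp k))
   \<and> (\<forall>v. Lm 0 v = v \<and> Lp 0 v = v)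
   \<and> (\<forall>a b v. Lm a (Lm b v) = scale (of_nat ((a + b) choose a)) (Lm (a + b) v))
   \<and> (\<forall>a b v. Lp a (Lp b v) = scale (of_nat ((a + b) choose a)) (Lp (a + b) v))
   \<and> (\<forall>n r v. v \<in> Vn n \<longrightarrow>
        Lm r v \<in> Vn (n + int r) \<and> Lp r v \<in> Vn (n - int r)
        \<and> L0 r v = scale (of_int (ibinom (-2 * n) r)) v)
   \<and> (\<forall>a b n w. w \<in> Vn n \<longrightarrow>
        Lp a (Lm b w) = (\<Sum>j\<le>min a b. scale (of_int ((-1)^j * ibinom (int a - int b - 2 * n) j))
                                         (Lm (b - j) (Lp (a - j) w))))"

definition H_submodule ::
  "(nat \<Rightarrow> 'v \<Rightarrow> 'v) \<Rightarrow> (nat \<Rightarrow> 'v \<Rightarrow> 'v) \<Rightarrow> (nat \<Rightarrow> 'v \<Rightarrow> 'v) \<Rightarrow> 'v set \<Rightarrow> bool" where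
  "H_submodule Lm L0 Lp U \<longleftrightarrow> (\<forall>k x. x \<in> U \<longrightarrow> Lm k x \<in> U \<and> L0 k x \<in> U \<and> Lp k x \<in> U)"

text \<open>The conjugation axiom
  e^{zL_1} Y(v,z_0) e^{-zL_1} = Y(e^{z(1-zz_0)L_1}(1-zz_0)^{-2deg} v, z_0/(1-zz_0))
  written coefficientwise: for v \<in> V_n, the coefficient of z^N z_0^{-r-1} applied to w.\<close>
definition H_module_VA ::
  "('a::field \<Rightarrow> 'v::ab_group_add \<Rightarrow> 'v) \<Rightarrow> 'v \<Rightarrow> ('v \<Rightarrow> int \<Rightarrow> 'v \<Rightarrow> 'v) \<Rightarrow> (int \<Rightarrow> 'v set)
   \<Rightarrow> (nat \<Rightarrow> 'v \<Rightarrow> 'v) \<Rightarrow> (nat \<Rightarrow> 'v \<Rightarrow> 'v) \<Rightarrow> (nat \<Rightarrow> 'v \<Rightarrow> 'v) \<Rightarrow> bool" where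
  "H_module_VA scale vac Y Vn Lm L0 Lp \<longleftrightarrow>
     graded_vertex_algebra scale vac Y Vn
   \<and> weight_H_module scale Vn Lm L0 Lp
   \<and> (\<forall>k v. Lm k v = Y v (- int k - 1) vac)
   \<and> (\<exists>N. \<forall>n<N. Vn n = {0})
   \<and> (\<forall>k. Lp k vac = (if k = 0 then vac else 0))
   \<and> (\<forall>n v w r N. v \<in> Vn n \<longrightarrow>
        (\<Sum>b\<le>N. scale ((-1)^b) (Lp (N - b) (Y v r (Lp b w))))
      = (\<Sum>j\<le>N. scale (of_int ((-1)^j * ibinom (int N - 2 * n + r + 1) j)) (Y (Lp (N - j) v) (r + int j) w)))"

end

theory Submission
  imports Defs
begin

locale hva =
  fixes scale :: "'a::field \<Rightarrow> 'v::ab_group_add \<Rightarrow> 'v"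
    and vac :: 'v and Y :: "'v \<Rightarrow> int \<Rightarrow> 'v \<Rightarrow> 'v" and Vn :: "int \<Rightarrow> 'v set"
    and Lm L0 Lp :: "nat \<Rightarrow> 'v \<Rightarrow> 'v"
  assumes HVA: "H_module_VA scale vac Y Vn Lm L0 Lp"
    and negV: "\<And>n. n < 0 \<Longrightarrow> Vn n = {0}"
    and V0: "Vn 0 = range (\<lambda>c. scale c vac)"
begin

lemma gva: "graded_vertex_algebra scale vac Y Vn"
  using HVA unfolding H_module_VA_def by blast
lemma va: "vertex_algebra scale vac Y"
  using gva unfolding graded_vertex_algebra_def by blast
lemma wH: "weight_H_module scale Vn Lm L0 Lp"
  using HVA unfolding H_module_VA_def by blast

lemma VS: "vector_space scale" using va unfolding vertex_algebra_def by blast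

sublocale vs: vector_space scale by (rule VS)

lemma mhR: "module_hom scale scale (Y u r)"
  using va unfolding vertex_algebra_def module_hom_iff_linear by blast
lemma mhL: "module_hom scale scale (\<lambda>u. Y u r v)"
  using va unfolding vertex_algebra_def module_hom_iff_linear by blast

lemma Y0R[simp]: "Y u r 0 = 0" using module_hom.zero[OF mhR] .
lemma Y0L[simp]: "Y 0 r v = 0" using module_hom.zero[OF mhL[of r v]] by simp
lemma YaddR: "Y u r (a + b) = Y u r a + Y u r b" using module_hom.add[OF mhR] .
lemma YaddL: "Y (a + b) r v = Y a r v + Y b r v" using module_hom.add[OF mhL[of r v]] by simp
lemma YsumR: "Y u r (sum f A) = (\<Sum>a\<in>A. Y u r (f a))" using module_hom.sum[OF mhR] .
lemma YsumL: "Y (sum f A) r v = (\<Sum>a\<in>A. Y (f a) r v)" using module_hom.sum[OF mhL[of r v]] by simp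

lemma trunc: "\<exists>N. \<forall>r\<ge>N. Y u r v = 0"
  using va unfolding vertex_algebra_def by blast
lemma creat: "Y u (-1) vac = u"
  using va unfolding vertex_algebra_def by blast
lemma creat0: "r \<ge> 0 \<Longrightarrow> Y u r vac = 0"
  using va unfolding vertex_algebra_def by blast
lemma borch: "(\<forall>i\<ge>N. Y u (r + int i) v = 0 \<and> Y v (n + int i) w = 0 \<and> Y u (m + int i) w = 0) \<Longrightarrow>
        (\<Sum>i<N. scale (of_int (ibinom m i)) (Y (Y u (r + int i) v) (m + n - int i) w))
      = (\<Sum>i<N. scale (of_int ((-1)^i * ibinom r i))
            (Y u (m + r - int i) (Y v (n + int i) w)
             - scale (if even r then 1 else -1) (Y v (n + r - int i) (Y u (m + int i) w))))"
  using va unfolding vertex_algebra_def by blast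

lemma dsg: "direct_sum_grading scale Vn" using gva unfolding graded_vertex_algebra_def by blast
lemma subV: "vs.subspace (Vn n)" using dsg unfolding direct_sum_grading_def by blast
lemma decomp: "\<exists>c. (\<forall>n. c n \<in> Vn n) \<and> finite {n. c n \<noteq> 0} \<and> v = sum c {n. c n \<noteq> 0}"
  using dsg unfolding direct_sum_grading_def by blast
lemma uniq: "\<exists>!c :: int \<Rightarrow> 'v. (\<forall>n. c n \<in> Vn n) \<and> finite {n. c n \<noteq> 0} \<and> v = sum c {n. c n \<noteq> 0}"
  using dsg unfolding direct_sum_grading_def by blast
lemma vacV0: "vac \<in> Vn 0" using gva unfolding graded_vertex_algebra_def by blast
lemma Ydeg: "u \<in> Vn m \<Longrightarrow> v \<in> Vn n \<Longrightarrow> Y u r v \<in> Vn (m + n - r - 1)"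
  using gva unfolding graded_vertex_algebra_def by blast

lemma ibinom0: "ibinom r 0 = 1" by (simp add: ibinom_def)
lemma ibinom0l: "ibinom 0 i = (if i = 0 then 1 else 0)"
  by (cases i) (simp_all add: ibinom_def)

lemma lin_span:
  assumes "module_hom scale scale f" "vs.subspace T" "\<And>s. s \<in> S \<Longrightarrow> f s \<in> T" "x \<in> vs.span S"
  shows "f x \<in> T"
  using assms(4)
proof (induction rule: vs.span_induct_alt)
  case base then show ?case using module_hom.zero[OF assms(1)] vs.subspace_0[OF assms(2)] by simp
next
  case (step c x y)
  then show ?case using module_hom.add[OF assms(1)] module_hom.scale[OF assms(1)] assms(2,3)
    by (simp add: vs.subspace_add vs.subspace_scale)
qed

lemma sum_supp: "finite F \<Longrightarrow> {n. c n \<noteq> 0} \<subseteq> F \<Longrightarrow> sum c {n. (c n :: 'v) \<noteq> 0} = sum c F"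
  by (rule sum.mono_neutral_left) auto

lemma span_homog_decomp:
  assumes hom: "\<And>g. g \<in> G \<Longrightarrow> \<exists>d\<in>A. g \<in> Vn d" and GT: "G \<subseteq> T" and T: "vs.subspace T"
    and x: "x \<in> vs.span G"
  shows "\<exists>c. (\<forall>n. c n \<in> T \<inter> Vn n) \<and> (\<forall>n. n \<notin> A \<longrightarrow> c n = 0) \<and> finite {n. c n \<noteq> 0} \<and> x = sum c {n. c n \<noteq> 0}"
  using x
proof (induction rule: vs.span_induct_alt)
  case base
  show ?case by (rule exI[of _ "\<lambda>_. 0"]) (simp add: vs.subspace_0[OF T] vs.subspace_0[OF subV])
next
  case (step a g y)
  from step.IH obtain c where c: "\<forall>n. c n \<in> T \<inter> Vn n" "\<forall>n. n \<notin> A \<longrightarrow> c n = 0" "finite {n. c n \<noteq> 0}"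
    "y = sum c {n. c n \<noteq> 0}" by blast
  from hom[OF step.hyps] obtain d where d: "d \<in> A" "g \<in> Vn d" by blast
  define c' where "c' = (\<lambda>n. c n + (if n = d then scale a g else 0))"
  have gT: "g \<in> T" using GT step.hyps by blast
  have 1: "\<forall>n. c' n \<in> T \<inter> Vn n"
    using c(1) d gT by (auto simp: c'_def intro!: vs.subspace_add[OF T] vs.subspace_add[OF subV]
        vs.subspace_scale[OF T] vs.subspace_scale[OF subV] vs.subspace_0[OF T] vs.subspace_0[OF subV])
  have 2: "\<forall>n. n \<notin> A \<longrightarrow> c' n = 0" using c(2) d by (auto simp: c'_def)
  define F where "F = insert d {n. c n \<noteq> 0}"
  have F: "finite F" using c(3) by (simp add: F_def)
  have sub: "{n. c' n \<noteq> 0} \<subseteq> F" by (auto simp: c'_def F_def)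
  have 3: "finite {n. c' n \<noteq> 0}" using F sub finite_subset by blast
  have "sum c' {n. c' n \<noteq> 0} = sum c' F" by (rule sum_supp[OF F sub])
  also have "\<dots> = sum c F + (\<Sum>n\<in>F. if n = d then scale a g else 0)"
    by (simp add: c'_def sum.distrib)
  also have "\<dots> = y + scale a g"
  proof -
    have "{n. c n \<noteq> 0} \<subseteq> F" by (auto simp: F_def)
    then have "sum c F = y" using sum_supp[OF F] c(4) by metis
    moreover have "(\<Sum>n\<in>F. if n = d then scale a g else 0) = scale a g"
      using F by (simp add: F_def)
    ultimately show ?thesis by simp
  qed
  finally have 4: "scale a g + y = sum c' {n. c' n \<noteq> 0}" by (simp add: add.commute)
  show ?case using 1 2 3 4 by blast
qed

lemma vac_notin:
  assumes nz: "vac \<noteq> 0" and hom: "\<And>g. g \<in> G \<Longrightarrow> \<exists>d. d \<noteq> 0 \<and> g \<in> Vn d"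
  shows "vac \<notin> vs.span G"
proof
  assume "vac \<in> vs.span G"
  from span_homog_decomp[of G "-{0}" UNIV, OF _ _ _ this] hom
  obtain c where c: "\<forall>n. c n \<in> Vn n" "c 0 = 0" "finite {n. c n \<noteq> 0}" "vac = sum c {n. c n \<noteq> 0}"
    by auto
  define e where "e = (\<lambda>n::int. if n = 0 then vac else 0)"
  have e1: "\<forall>n. e n \<in> Vn n" using vacV0 vs.subspace_0[OF subV] by (simp add: e_def)
  have es: "{n. e n \<noteq> 0} = {0}" using nz by (auto simp: e_def)
  have e2: "finite {n. e n \<noteq> 0}" "vac = sum e {n. e n \<noteq> 0}" using es by (auto simp: e_def)
  have "c = e"
  proof -
    obtain f where f: "\<And>c'. (\<forall>n. c' n \<in> Vn n) \<and> finite {n. c' n \<noteq> 0} \<and> vac = sum c' {n. c' n \<noteq> 0} \<Longrightarrow> c' = f"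
      using uniq[of vac] by (elim ex1E) blast
    have "c = f" by (rule f) (use c(1,3,4) in blast)
    moreover have "e = f" by (rule f) (use e1 e2 in blast)
    ultimately show ?thesis by simp
  qed
  then show False using c(2) nz by (simp add: e_def)
qed

definition propsub :: "'v set \<Rightarrow> bool" where
  "propsub U \<longleftrightarrow> graded_V_submodule scale Vn Y U \<and> U \<noteq> UNIV"

lemma Jmax_eq: "Jmax scale Vn Y = vs.span (\<Union>{U. propsub U})"
  unfolding Jmax_def propsub_def by (rule refl)

lemma propsub_J: "propsub U \<Longrightarrow> U \<subseteq> Jmax scale Vn Y"
proof
  fix x assume "propsub U" "x \<in> U"
  then have "x \<in> \<Union>{U. propsub U}" by blast
  then show "x \<in> Jmax scale Vn Y" unfolding Jmax_eq by (rule vs.span_base)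
qed

context fixes U assumes U: "propsub U"
begin
lemma U_sub: "vs.subspace U"
  using U unfolding propsub_def graded_V_submodule_def graded_subspace_def by blast
lemma U_Y: "x \<in> U \<Longrightarrow> Y u r x \<in> U"
  using U unfolding propsub_def graded_V_submodule_def by blast
lemma U_dec: "x \<in> U \<Longrightarrow> \<exists>c. (\<forall>n. c n \<in> U \<inter> Vn n) \<and> finite {n. c n \<noteq> 0} \<and> x = sum c {n. c n \<noteq> 0}"
  using U unfolding propsub_def graded_V_submodule_def graded_subspace_def by blast
lemma U_vac: "vac \<notin> U"
proof
  assume "vac \<in> U"
  then have "\<forall>u. u \<in> U" using U_Y creat by metis
  then show False using U unfolding propsub_def by blast
qed
lemma U_vac0: "vac \<noteq> 0" using U_vac vs.subspace_0[OF U_sub] by metis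
lemma U_0: "x \<in> U \<Longrightarrow> x \<in> Vn 0 \<Longrightarrow> x = 0"
proof -
  assume x: "x \<in> U" "x \<in> Vn 0"
  then obtain c where c: "x = scale c vac" using V0 by auto
  show "x = 0"
  proof (cases "c = 0")
    case True then show ?thesis using c by simp
  next
    case False
    then have "scale (inverse c) x = vac" using c by simp
    then have "vac \<in> U" using vs.subspace_scale[OF U_sub x(1)] by metis
    then show ?thesis using U_vac by blast
  qed
qed
end


lemma gen_sub:
  assumes nz: "vac \<noteq> 0"
    and hom: "\<And>g. g \<in> G \<Longrightarrow> \<exists>d. g \<in> Vn d \<and> (d = 0 \<longrightarrow> g = 0)"
    and closed: "\<And>u r g. g \<in> G \<Longrightarrow> Y u r g \<in> vs.span G"
  shows "propsub (vs.span G)"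
  unfolding propsub_def graded_V_submodule_def graded_subspace_def
proof (intro conjI ballI allI impI)
  show "vs.subspace (vs.span G)" by simp
  show "Y u r x \<in> vs.span G" if "x \<in> vs.span G" for u r x
    by (rule lin_span[OF mhR _ _ that]) (auto intro: closed)
  show "\<exists>c. (\<forall>n. c n \<in> vs.span G \<inter> Vn n) \<and> finite {n. c n \<noteq> 0} \<and> x = sum c {n. c n \<noteq> 0}"
    if "x \<in> vs.span G" for x
    using span_homog_decomp[of G UNIV "vs.span G" x] that hom vs.span_superset by blast
  have "vac \<notin> vs.span G"
  proof (rule vac_notin[OF nz])
    fix g assume "g \<in> G"
    then obtain d where d: "g \<in> Vn d" "d = 0 \<longrightarrow> g = 0" using hom by blast
    show "\<exists>d. d \<noteq> 0 \<and> g \<in> Vn d"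
    proof (cases "d = 0")
      case True then show ?thesis using d vs.subspace_0[OF subV, of 1] by (intro exI[of _ 1]) simp
    next
      case False then show ?thesis using d by blast
    qed
  qed
  then show "vs.span G \<noteq> UNIV" by blast
qed

lemma skew0:
  assumes h: "\<And>i::nat. Y u (r + int i) v = 0"
  shows "Y v r u = 0"
proof -
  have pre: "\<forall>i\<ge>1. Y u (r + int i) v = 0 \<and> Y v (0 + int i) vac = 0 \<and> Y u (-1 + int i) vac = 0"
    using h creat0 by auto
  have h0: "Y u r v = 0" using h[of 0] by simp
  from borch[OF pre] have
    "Y (Y u r v) (-1) vac = - scale (if even r then 1 else -1) (Y v r u)"
    using creat0[of 0] creat[of u] by (simp add: ibinom0)
  then have "scale (if even r then 1 else -1) (Y v r u) = - Y (Y u r v) (-1) vac" by simp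
  then have "scale (if even r then 1 else -1) (Y v r u) = 0" using h0 by simp
  then show ?thesis by (cases "even r") auto
qed

lemma comm:
  "\<exists>N. Y a s (Y y k w) = Y y k (Y a s w) + (\<Sum>i<N. scale (of_int (ibinom s i)) (Y (Y a (int i) y) (s + k - int i) w))"
proof -
  obtain N1 where N1: "\<forall>r\<ge>N1. Y a r y = 0" using trunc by blast
  obtain N2 where N2: "\<forall>r\<ge>N2. Y y r w = 0" using trunc by blast
  obtain N3 where N3: "\<forall>r\<ge>N3. Y a r w = 0" using trunc by blast
  define N where "N = Suc (nat (\<bar>N1\<bar> + \<bar>N2\<bar> + \<bar>N3\<bar> + \<bar>k\<bar> + \<bar>s\<bar>))"
  have NN: "int N \<ge> N1" "k + int N \<ge> N2" "s + int N \<ge> N3" unfolding N_def by linarith+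
  have pre: "\<forall>i\<ge>N. Y a (0 + int i) y = 0 \<and> Y y (k + int i) w = 0 \<and> Y a (s + int i) w = 0"
  proof (intro allI impI conjI)
    fix i assume "N \<le> i"
    then have "int N \<le> int i" by simp
    then show "Y a (0 + int i) y = 0" "Y y (k + int i) w = 0" "Y a (s + int i) w = 0"
      using N1 N2 N3 NN by (simp_all)
  qed
  have N0: "0 < N" by (simp add: N_def)
  define F where "F = (\<lambda>i::nat. scale (of_int ((-1)^i * ibinom 0 i))
            (Y a (s + 0 - int i) (Y y (k + int i) w)
             - scale (if even (0::int) then 1 else -1) (Y y (k + 0 - int i) (Y a (s + int i) w))))"
  have Fz: "F i = 0" if "i \<noteq> 0" for i using that by (simp add: F_def ibinom0l)
  have "sum F {..<N} = sum F {0}"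
    by (rule sum.mono_neutral_right) (use N0 Fz in auto)
  also have "\<dots> = Y a s (Y y k w) - Y y k (Y a s w)" by (simp add: F_def ibinom0l)
  finally have e1: "sum F {..<N} = Y a s (Y y k w) - Y y k (Y a s w)" .
  have "(\<Sum>i<N. scale (of_int (ibinom s i)) (Y (Y a (0 + int i) y) (s + k - int i) w)) = sum F {..<N}"
    unfolding F_def by (rule borch[OF pre])
  then have "(\<Sum>i<N. scale (of_int (ibinom s i)) (Y (Y a (int i) y) (s + k - int i) w))
     = Y a s (Y y k w) - Y y k (Y a s w)" using e1 by simp
  then show ?thesis by (intro exI[of _ N]) (simp add: algebra_simps)
qed

definition G1 :: "'v set \<Rightarrow> 'v set" where
  "G1 U = {Y y k w | y k w. \<exists>m n. y \<in> U \<inter> Vn m \<and> w \<in> Vn n}"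

context fixes U assumes U: "propsub U"
begin

lemma G1_hom: "g \<in> G1 U \<Longrightarrow> \<exists>d. g \<in> Vn d \<and> (d = 0 \<longrightarrow> g = 0)"
proof -
  assume "g \<in> G1 U"
  then obtain y k w m n where g: "g = Y y k w" "y \<in> U" "y \<in> Vn m" "w \<in> Vn n"
    unfolding G1_def by blast
  have "g \<in> Vn (m + n - k - 1)" using Ydeg g by simp
  moreover have "g = 0" if d0: "m + n - k - 1 = 0"
  proof -
    have "Y w (k + int i) y = 0" for i
    proof -
      have in1: "Y w (k + int i) y \<in> U" using U_Y[OF U g(2)] .
      have eq: "n + m - (k + int i) - 1 = - int i" using d0 by linarith
      have in2: "Y w (k + int i) y \<in> Vn (- int i)" using Ydeg[OF g(4) g(3), of "k + int i"] unfolding eq .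
      show ?thesis
      proof (cases "i = 0")
        case True then show ?thesis using U_0[OF U in1] in2 by simp
      next
        case False then have "- int i < 0" by simp
        then have "Vn (- int i) = {0}" by (rule negV)
        then show ?thesis using in2 by simp
      qed
    qed
    then have "Y y k w = 0" by (rule skew0)
    then show ?thesis using g(1) by simp
  qed
  ultimately show ?thesis by blast
qed

lemma inG1: "y \<in> U \<Longrightarrow> Y y k w \<in> vs.span (G1 U)"
proof -
  assume y: "y \<in> U"
  obtain c where c: "\<forall>n. c n \<in> U \<inter> Vn n" "y = sum c {n. c n \<noteq> 0}" using U_dec[OF U y] by blast
  obtain e where e: "\<forall>n. e n \<in> Vn n" "w = sum e {n. e n \<noteq> 0}" using decomp[of w] by blast
  have "Y y k w = (\<Sum>n'\<in>{n. e n \<noteq> 0}. \<Sum>n\<in>{n. c n \<noteq> 0}. Y (c n) k (e n'))"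
    by (subst c(2), subst e(2)) (simp add: YsumL YsumR)
  also have "\<dots> \<in> vs.span (G1 U)"
    by (intro vs.span_sum vs.span_base) (use c(1) e(1) in \<open>fastforce simp: G1_def\<close>)
  finally show ?thesis .
qed

lemma G1_closed: "g \<in> G1 U \<Longrightarrow> Y a s g \<in> vs.span (G1 U)"
proof -
  assume "g \<in> G1 U"
  then obtain y k w where g: "g = Y y k w" "y \<in> U" unfolding G1_def by blast
  obtain N where N: "Y a s (Y y k w) = Y y k (Y a s w) + (\<Sum>i<N. scale (of_int (ibinom s i)) (Y (Y a (int i) y) (s + k - int i) w))"
    using comm by blast
  show ?thesis unfolding g(1) N
    by (intro vs.span_add vs.span_sum vs.span_scale inG1 U_Y[OF U] g(2))
qed

lemma G1_prop: "propsub (vs.span (G1 U))"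
  by (rule gen_sub[OF U_vac0[OF U] G1_hom G1_closed])

lemma Y_left_J: "x \<in> U \<Longrightarrow> Y x r u \<in> Jmax scale Vn Y"
  using inG1 propsub_J[OF G1_prop] by blast

end



theorem part1: "VA_ideal scale Y (Jmax scale Vn Y)"
  unfolding VA_ideal_def
proof (intro conjI allI impI)
  show "vs.subspace (Jmax scale Vn Y)" unfolding Jmax_eq by simp
  fix u r x assume x: "x \<in> Jmax scale Vn Y"
  have sJ: "vs.subspace (Jmax scale Vn Y)" unfolding Jmax_eq by simp
  show "Y u r x \<in> Jmax scale Vn Y"
  proof (rule lin_span[OF mhR sJ])
    fix z assume "z \<in> \<Union>{U. propsub U}"
    then obtain U where "propsub U" "z \<in> U" by blast
    then show "Y u r z \<in> Jmax scale Vn Y" using U_Y propsub_J by blast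
  next
    show "x \<in> vs.span (\<Union>{U. propsub U})" using x unfolding Jmax_eq .
  qed
  have "(\<lambda>x. Y x r u) x \<in> Jmax scale Vn Y"
  proof (rule lin_span[OF mhL sJ])
    fix z assume "z \<in> \<Union>{U. propsub U}"
    then obtain U where "propsub U" "z \<in> U" by blast
    then show "Y z r u \<in> Jmax scale Vn Y" using Y_left_J by blast
  next
    show "x \<in> vs.span (\<Union>{U. propsub U})" using x unfolding Jmax_eq .
  qed
  then show "Y x r u \<in> Jmax scale Vn Y" by simp
qed
lemma mhLp: "module_hom scale scale (Lp k)"
  using wH unfolding weight_H_module_def module_hom_iff_linear by blast
lemma mhL0: "module_hom scale scale (L0 k)"
  using wH unfolding weight_H_module_def module_hom_iff_linear by blast
lemma Lp0: "Lp 0 v = v"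
  using wH unfolding weight_H_module_def by blast
lemma LpLp: "Lp a (Lp b v) = scale (of_nat ((a + b) choose a)) (Lp (a + b) v)"
  using wH unfolding weight_H_module_def by blast
lemma Lpdeg: "v \<in> Vn n \<Longrightarrow> Lp r v \<in> Vn (n - int r)"
  using wH unfolding weight_H_module_def by blast
lemma L0act: "v \<in> Vn n \<Longrightarrow> L0 r v = scale (of_int (ibinom (-2 * n) r)) v"
  using wH unfolding weight_H_module_def by blast
lemma Lmdef: "Lm k v = Y v (- int k - 1) vac"
  using HVA unfolding H_module_VA_def by blast
lemma CA: "v \<in> Vn n \<Longrightarrow>
        (\<Sum>b\<le>N. scale ((-1)^b) (Lp (N - b) (Y v r (Lp b w))))
      = (\<Sum>j\<le>N. scale (of_int ((-1)^j * ibinom (int N - 2 * n + r + 1) j)) (Y (Lp (N - j) v) (r + int j) w))"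
  using HVA unfolding H_module_VA_def by blast

definition G2 :: "'v set \<Rightarrow> 'v set" where
  "G2 U = {Lp k x | k x. \<exists>n. x \<in> U \<inter> Vn n}"

context fixes U assumes U: "propsub U"
  and hL: "\<forall>n::nat\<ge>1. \<forall>v\<in>Vn (int n). Lp n v = 0"
begin

lemma G2_hom: "g \<in> G2 U \<Longrightarrow> \<exists>d. g \<in> Vn d \<and> (d = 0 \<longrightarrow> g = 0)"
proof -
  assume "g \<in> G2 U"
  then obtain k x n where g: "g = Lp k x" "x \<in> U" "x \<in> Vn n" unfolding G2_def by blast
  have "g \<in> Vn (n - int k)" using Lpdeg g by simp
  moreover have "g = 0" if d0: "n - int k = 0"
  proof (cases "k = 0")
    case True
    then have "x \<in> Vn 0" using g(3) d0 by simp
    then have "x = 0" using U_0[OF U g(2)] by simp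
    then show ?thesis using g(1) True Lp0 by simp
  next
    case False
    then have "x \<in> Vn (int k)" "k \<ge> 1" using g(3) d0 by auto
    then show ?thesis using hL g(1) by blast
  qed
  ultimately show ?thesis by (intro exI[of _ "n - int k"]) simp
qed

lemma U_G2: "x \<in> U \<Longrightarrow> x \<in> vs.span (G2 U)"
proof -
  assume x: "x \<in> U"
  obtain c where c: "\<forall>n. c n \<in> U \<inter> Vn n" "x = sum c {n. c n \<noteq> 0}" using U_dec[OF U x] by blast
  have "c n \<in> G2 U" for n
  proof -
    have "c n = Lp 0 (c n)" by (simp add: Lp0)
    then show ?thesis unfolding G2_def using c(1) by blast
  qed
  then have "sum c {n. c n \<noteq> 0} \<in> vs.span (G2 U)" by (intro vs.span_sum vs.span_base)
  then show ?thesis using c(2) by simp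
qed

lemma Lp_G2: "z \<in> vs.span (G2 U) \<Longrightarrow> Lp a z \<in> vs.span (G2 U)"
proof (rule lin_span[OF mhLp, where S="G2 U"])
  show "vs.subspace (vs.span (G2 U))" by simp
  fix g assume "g \<in> G2 U"
  then obtain k x n where g: "g = Lp k x" "x \<in> U" "x \<in> Vn n" unfolding G2_def by blast
  have "Lp (a + k) x \<in> G2 U" unfolding G2_def using g by blast
  then show "Lp a g \<in> vs.span (G2 U)" unfolding g(1) LpLp by (intro vs.span_scale vs.span_base)
qed

lemma sgn_sq: "((-1::'a)^k) * (-1)^k = 1"
  by (simp add: power_mult_distrib[symmetric])

lemma Y_Lp_G2: "v \<in> Vn n0 \<Longrightarrow> x \<in> U \<Longrightarrow> Y v r (Lp k x) \<in> vs.span (G2 U)"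
proof (induction k arbitrary: r rule: less_induct)
  case (less k)
  define T where "T = (\<lambda>b. scale ((-1::'a)^b) (Lp (k - b) (Y v r (Lp b x))))"
  have ca: "sum T {..k} = (\<Sum>j\<le>k. scale (of_int ((-1)^j * ibinom (int k - 2 * n0 + r + 1) j)) (Y (Lp (k - j) v) (r + int j) x))"
    unfolding T_def by (rule CA[OF less.prems(1)])
  have R: "sum T {..k} \<in> vs.span (G2 U)"
    unfolding ca by (intro vs.span_sum vs.span_scale U_G2 U_Y[OF U] less.prems(2))
  have L: "sum T {..<k} \<in> vs.span (G2 U)"
  proof (intro vs.span_sum)
    fix b assume "b \<in> {..<k}"
    then have "Y v r (Lp b x) \<in> vs.span (G2 U)" using less.IH less.prems by simp
    then show "T b \<in> vs.span (G2 U)" unfolding T_def by (intro vs.span_scale Lp_G2)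
  qed
  have "sum T {..k} = sum T {..<k} + T k"
    by (simp add: lessThan_Suc_atMost[symmetric])
  then have "T k = sum T {..k} - sum T {..<k}" by simp
  then have Tk: "T k \<in> vs.span (G2 U)" using R L vs.span_diff by simp
  have "scale ((-1)^k) (T k) = Y v r (Lp k x)"
    unfolding T_def by (simp add: Lp0 sgn_sq)
  then show ?case using vs.span_scale[OF Tk] by metis
qed

lemma G2_closed: "g \<in> G2 U \<Longrightarrow> Y u r g \<in> vs.span (G2 U)"
proof -
  assume "g \<in> G2 U"
  then obtain k x n where g: "g = Lp k x" "x \<in> U" unfolding G2_def by blast
  obtain c where c: "\<forall>n. c n \<in> Vn n" "u = sum c {n. c n \<noteq> 0}" using decomp[of u] by blast
  have "Y u r g = (\<Sum>n\<in>{n. c n \<noteq> 0}. Y (c n) r (Lp k x))"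
    by (subst c(2)) (simp add: YsumL g(1))
  also have "\<dots> \<in> vs.span (G2 U)"
    by (intro vs.span_sum Y_Lp_G2[OF _ g(2)]) (use c(1) in blast)
  finally show ?thesis .
qed

lemma G2_prop: "propsub (vs.span (G2 U))"
  by (rule gen_sub[OF U_vac0[OF U] G2_hom G2_closed])

lemma Lp_J: "x \<in> U \<Longrightarrow> Lp k x \<in> Jmax scale Vn Y"
proof -
  assume x: "x \<in> U"
  obtain c where c: "\<forall>n. c n \<in> U \<inter> Vn n" "x = sum c {n. c n \<noteq> 0}" using U_dec[OF U x] by blast
  have "Lp k x = (\<Sum>n\<in>{n. c n \<noteq> 0}. Lp k (c n))"
    by (subst c(2)) (rule module_hom.sum[OF mhLp])
  also have "\<dots> \<in> vs.span (G2 U)"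
    by (intro vs.span_sum vs.span_base) (use c(1) in \<open>auto simp: G2_def\<close>)
  finally show ?thesis using propsub_J[OF G2_prop] by blast
qed
end

lemma L0_J: "propsub U \<Longrightarrow> x \<in> U \<Longrightarrow> L0 k x \<in> U"
proof -
  assume U: "propsub U" and x: "x \<in> U"
  obtain c where c: "\<forall>n. c n \<in> U \<inter> Vn n" "x = sum c {n. c n \<noteq> 0}" using U_dec[OF U x] by blast
  have "L0 k x = (\<Sum>n\<in>{n. c n \<noteq> 0}. L0 k (c n))"
    by (subst c(2)) (rule module_hom.sum[OF mhL0])
  also have "\<dots> = (\<Sum>n\<in>{n. c n \<noteq> 0}. scale (of_int (ibinom (-2 * n) k)) (c n))"
    using c(1) L0act by (intro sum.cong) auto
  also have "\<dots> \<in> U"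
    by (intro vs.subspace_sum[OF U_sub[OF U]] vs.subspace_scale[OF U_sub[OF U]]) (use c(1) in blast)
  finally show ?thesis .
qed

theorem part2:
  assumes hL: "\<forall>n::nat\<ge>1. \<forall>v\<in>Vn (int n). Lp n v = 0"
  shows "H_submodule Lm L0 Lp (Jmax scale Vn Y)"
  unfolding H_submodule_def
proof (intro allI impI conjI)
  fix k x assume x: "x \<in> Jmax scale Vn Y"
  have sJ: "vs.subspace (Jmax scale Vn Y)" unfolding Jmax_eq by simp
  have xs: "x \<in> vs.span (\<Union>{U. propsub U})" using x unfolding Jmax_eq .
  show "Lm k x \<in> Jmax scale Vn Y"
    unfolding Lmdef using part1 x unfolding VA_ideal_def by blast
  show "L0 k x \<in> Jmax scale Vn Y"
  proof (rule lin_span[OF mhL0 sJ _ xs])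
    fix z assume "z \<in> \<Union>{U. propsub U}"
    then obtain U where "propsub U" "z \<in> U" by blast
    then show "L0 k z \<in> Jmax scale Vn Y" using L0_J propsub_J by blast
  qed
  show "Lp k x \<in> Jmax scale Vn Y"
  proof (rule lin_span[OF mhLp sJ _ xs])
    fix z assume "z \<in> \<Union>{U. propsub U}"
    then obtain U where U: "propsub U" "z \<in> U" by blast
    show "Lp k z \<in> Jmax scale Vn Y" by (rule Lp_J[OF U(1) hL U(2)])
  qed
qed

end

theorem lemma4p12:
  fixes scale :: "'a::field \<Rightarrow> 'v::ab_group_add \<Rightarrow> 'v"
    and vac :: 'v and Y :: "'v \<Rightarrow> int \<Rightarrow> 'v \<Rightarrow> 'v" and Vn :: "int \<Rightarrow> 'v set"
    and Lm L0 Lp :: "nat \<Rightarrow> 'v \<Rightarrow> 'v" and p :: nat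
  assumes "alg_closed_field TYPE('a)"
    and "prime p" and "odd p" and "CHAR('a) = p"
    and "H_module_VA scale vac Y Vn Lm L0 Lp"
    and "\<forall>n<0. Vn n = {0}"
    and "Vn 0 = range (\<lambda>c. scale c vac)"
  shows "VA_ideal scale Y (Jmax scale Vn Y)
    \<and> ((\<forall>n::nat\<ge>1. \<forall>v\<in>Vn (int n). Lp n v = 0) \<longrightarrow> H_submodule Lm L0 Lp (Jmax scale Vn Y))"
proof -
  interpret hva scale vac Y Vn Lm L0 Lp
    by (unfold_locales) (use assms(5,6,7) in auto)
  show ?thesis using part1 part2 by blast
qed

end
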